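(* Let $G$ be a graph with a linear order $<$ on $V(G)$ satisfying the X-property, let $s<t$ be vertices with $d^*:=\operatorname{dist}(s,t)<\infty$, and let $d$ be an integer. Each of the following conditions implies $d^*\le d$: (i) $\beta_s(\sigma)=\beta_t(\tau)$ for some nonnegative integers $\sigma,\tau$ with $\sigma+\tau=d$; (ii) $G$ contains an edge between $\alpha_s(\sigma)$ and $\alpha_t(\tau)$ for some nonnegative integers $\sigma,\tau$ with $\sigma+\tau=d-1$; (iii) there are nonnegative integers $\sigma,\tau$ with $\sigma+\tau=d-3$ and vertices $v\in\{\alpha_s(\sigma),\beta_s(\sigma)\}$, $w\in\{\alpha_t(\tau),\beta_t(\tau)\}$ with $v<w$, $\operatorname{rhorizon}(v)\ge t$ and $\operatorname{lhorizon}(w)\le s$.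
   Context: The X-property: for all vertices $p<q<r<s$, if $\{p,r\}\in E(G)$ and $\{q,s\}\in E(G)$ then $\{p,s\}\in E(G)$. $N[v]$ is the closed neighborhood; $\operatorname{lhorizon}(v):=\min N[v]$ and $\operatorname{rhorizon}(v):=\max N[v]$ w.r.t. $<$. For an integer $k\ge 0$: $\alpha_s(k)$ (resp. $\beta_s(k)$) is the leftmost (resp. rightmost) vertex reachable from $s$ by a path of length at most $k$ using only vertices $v\le t$; $\alpha_t(k)$ (resp. $\beta_t(k)$) is the rightmost (resp. leftmost) vertex reachable from $t$ by a path of length at most $k$ using only vertices $v\ge s$. *)

theory Defs
  imports Main
begin

definition simple_graph :: "'a set \<Rightarrow> ('a \<Rightarrow> 'a \<Rightarrow> bool) \<Rightarrow> bool" where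
  "simple_graph V E \<longleftrightarrow> finite V \<and> (\<forall>u v. E u v \<longrightarrow> u \<in> V \<and> v \<in> V)
     \<and> (\<forall>u v. E u v \<longrightarrow> E v u) \<and> (\<forall>v. \<not> E v v)"

definition X_property :: "'a::linorder set \<Rightarrow> ('a \<Rightarrow> 'a \<Rightarrow> bool) \<Rightarrow> bool" where
  "X_property V E \<longleftrightarrow> (\<forall>p\<in>V. \<forall>q\<in>V. \<forall>r\<in>V. \<forall>s\<in>V.
      p < q \<and> q < r \<and> r < s \<and> E p r \<and> E q s \<longrightarrow> E p s)"

text \<open>A path (as a list of distinct vertices) all of whose vertices lie in S;
  its length is the number of edges, i.e. length xs - 1.\<close>
definition path_in :: "('a \<Rightarrow> 'a \<Rightarrow> bool) \<Rightarrow> 'a set \<Rightarrow> 'a list \<Rightarrow> bool" where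
  "path_in E S xs \<longleftrightarrow> xs \<noteq> [] \<and> distinct xs \<and> set xs \<subseteq> S
     \<and> (\<forall>i. Suc i < length xs \<longrightarrow> E (xs ! i) (xs ! Suc i))"

definition reach_le :: "('a \<Rightarrow> 'a \<Rightarrow> bool) \<Rightarrow> 'a set \<Rightarrow> nat \<Rightarrow> 'a \<Rightarrow> 'a \<Rightarrow> bool" where
  "reach_le E S k x y \<longleftrightarrow> (\<exists>xs. path_in E S xs \<and> hd xs = x \<and> last xs = y \<and> length xs \<le> Suc k)"

definition gdist :: "'a set \<Rightarrow> ('a \<Rightarrow> 'a \<Rightarrow> bool) \<Rightarrow> 'a \<Rightarrow> 'a \<Rightarrow> nat" where
  "gdist V E x y = (LEAST k. reach_le E V k x y)"

definition connected_pair :: "'a set \<Rightarrow> ('a \<Rightarrow> 'a \<Rightarrow> bool) \<Rightarrow> 'a \<Rightarrow> 'a \<Rightarrow> bool" where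
  "connected_pair V E x y \<longleftrightarrow> (\<exists>k. reach_le E V k x y)"

definition lhorizon :: "'a::linorder set \<Rightarrow> ('a \<Rightarrow> 'a \<Rightarrow> bool) \<Rightarrow> 'a \<Rightarrow> 'a" where
  "lhorizon V E v = Min ({v} \<union> {u \<in> V. E v u})"

definition rhorizon :: "'a::linorder set \<Rightarrow> ('a \<Rightarrow> 'a \<Rightarrow> bool) \<Rightarrow> 'a \<Rightarrow> 'a" where
  "rhorizon V E v = Max ({v} \<union> {u \<in> V. E v u})"

definition alpha_s :: "'a::linorder set \<Rightarrow> ('a \<Rightarrow> 'a \<Rightarrow> bool) \<Rightarrow> 'a \<Rightarrow> 'a \<Rightarrow> nat \<Rightarrow> 'a" where
  "alpha_s V E s t k = Min {v. reach_le E {u \<in> V. u \<le> t} k s v}"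

definition beta_s :: "'a::linorder set \<Rightarrow> ('a \<Rightarrow> 'a \<Rightarrow> bool) \<Rightarrow> 'a \<Rightarrow> 'a \<Rightarrow> nat \<Rightarrow> 'a" where
  "beta_s V E s t k = Max {v. reach_le E {u \<in> V. u \<le> t} k s v}"

definition alpha_t :: "'a::linorder set \<Rightarrow> ('a \<Rightarrow> 'a \<Rightarrow> bool) \<Rightarrow> 'a \<Rightarrow> 'a \<Rightarrow> nat \<Rightarrow> 'a" where
  "alpha_t V E s t k = Max {v. reach_le E {u \<in> V. s \<le> u} k t v}"

definition beta_t :: "'a::linorder set \<Rightarrow> ('a \<Rightarrow> 'a \<Rightarrow> bool) \<Rightarrow> 'a \<Rightarrow> 'a \<Rightarrow> nat \<Rightarrow> 'a" where
  "beta_t V E s t k = Min {v. reach_le E {u \<in> V. s \<le> u} k t v}"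

end

theory Submission
  imports Defs
begin

definition wk :: "('a \<Rightarrow> 'a \<Rightarrow> bool) \<Rightarrow> 'a set \<Rightarrow> nat \<Rightarrow> 'a \<Rightarrow> 'a \<Rightarrow> bool" where
 "wk E S k x y \<longleftrightarrow> (\<exists>xs. xs \<noteq> [] \<and> set xs \<subseteq> S \<and> successively E xs \<and> hd xs = x \<and> last xs = y \<and> length xs \<le> Suc k)"

lemma path_in_iff: "path_in E S xs \<longleftrightarrow> xs \<noteq> [] \<and> distinct xs \<and> set xs \<subseteq> S \<and> successively E xs"
  unfolding path_in_def successively_conv_nth by blast

lemma shorten:
  "xs \<noteq> [] \<Longrightarrow> set xs \<subseteq> S \<Longrightarrow> successively E xs \<Longrightarrow> \<exists>ys. ys \<noteq> [] \<and> distinct ys \<and> set ys \<subseteq> S \<and> successively E ys \<and> hd ys = hd xs \<and> last ys = last xs \<and> length ys \<le> length xs"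
proof (induction xs rule: length_induct)
  case (1 xs)
  show ?case
  proof (cases "distinct xs")
    case True then show ?thesis using "1.prems" by blast
  next
    case False
    then obtain as bs cs y where xs: "xs = as@[y]@bs@[y]@cs" using not_distinct_decomp by blast
    let ?zs = "as@[y]@cs"
    have e: "xs = (as@[y]@bs) @ (y#cs)" using xs by simp
    have s1: "successively E (as@[y])" using "1.prems"(3) unfolding e
      by (metis append_assoc successively_append_iff)
    have s0: "successively E ((as@[y]@bs) @ (y#cs))" using "1.prems"(3) e by (simp only:)
    have s2: "successively E (y#cs)" using s0 by (simp only: successively_append_iff)
    have "successively E ?zs" using s1 s2
      by (metis append_Cons append_Nil append_assoc hd_Cons_tl last_snoc list.distinct(1) successively_append_iff)
    moreover have "length ?zs < length xs" using xs by simp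
    moreover have "set ?zs \<subseteq> S" using "1.prems"(2) xs by auto
    moreover have "hd ?zs = hd xs" using xs by (cases as) auto
    moreover have "last ?zs = last xs" using xs by (cases cs) auto
    moreover have "?zs \<noteq> []" by simp
    ultimately obtain ys where "ys \<noteq> [] \<and> distinct ys \<and> set ys \<subseteq> S \<and> successively E ys \<and> hd ys = hd ?zs \<and> last ys = last ?zs \<and> length ys \<le> length ?zs"
      using "1.IH" by blast
    then show ?thesis using \<open>length ?zs < length xs\<close> \<open>hd ?zs = hd xs\<close> \<open>last ?zs = last xs\<close> by auto
  qed
qed

lemma reach_le_wk: "reach_le E S k x y \<longleftrightarrow> wk E S k x y"
proof
  assume "reach_le E S k x y" then show "wk E S k x y"
    unfolding reach_le_def wk_def path_in_iff by blast
next
  assume "wk E S k x y"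
  then obtain xs where "xs \<noteq> []" "set xs \<subseteq> S" "successively E xs" "hd xs = x" "last xs = y" "length xs \<le> Suc k"
    unfolding wk_def by blast
  then obtain ys where "ys \<noteq> []" "distinct ys" "set ys \<subseteq> S" "successively E ys" "hd ys = x" "last ys = y" "length ys \<le> Suc k"
    using shorten[of xs S E] by (metis order.trans)
  then show "reach_le E S k x y" unfolding reach_le_def path_in_iff by blast
qed

lemma wk_refl: "x \<in> S \<Longrightarrow> wk E S 0 x x"
  unfolding wk_def by (rule exI[of _ "[x]"]) auto

lemma wk_edge: "x \<in> S \<Longrightarrow> y \<in> S \<Longrightarrow> E x y \<Longrightarrow> wk E S 1 x y"
  unfolding wk_def by (rule exI[of _ "[x,y]"]) auto

lemma wk_trans: assumes "wk E S a x y" "wk E S b y z" shows "wk E S (a+b) x z"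
proof -
  obtain xs where xs: "xs \<noteq> []" "set xs \<subseteq> S" "successively E xs" "hd xs = x" "last xs = y" "length xs \<le> Suc a"
    using assms(1) unfolding wk_def by blast
  obtain ys where ys: "ys \<noteq> []" "set ys \<subseteq> S" "successively E ys" "hd ys = y" "last ys = z" "length ys \<le> Suc b"
    using assms(2) unfolding wk_def by blast
  let ?zs = "xs @ tl ys"
  have yy: "ys = y # tl ys" using ys(1,4) by (cases ys) auto
  have st: "successively E (y # tl ys)" using ys(3) yy by simp
  have "successively E ?zs" using xs(3,5) st
    by (auto simp: successively_append_iff successively_Cons)
  moreover have "set ?zs \<subseteq> S" using xs ys by (auto dest: list.set_sel(2))
  moreover have "hd ?zs = x" using xs by simp
  moreover have "last ?zs = z"
  proof (cases "tl ys = []")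
    case True then show ?thesis using xs(5) ys(5) yy by (metis append_Nil2 last.simps)
  next
    case False then show ?thesis using ys(5) yy by (metis last_ConsR last_appendR)
  qed
  moreover have "length ?zs \<le> Suc (a+b)" using xs ys by auto
  ultimately show ?thesis unfolding wk_def using xs by blast
qed

lemma wk_sym: assumes "\<And>u v. E u v \<Longrightarrow> E v u" "wk E S k x y" shows "wk E S k y x"
proof -
  obtain xs where xs: "xs \<noteq> []" "set xs \<subseteq> S" "successively E xs" "hd xs = x" "last xs = y" "length xs \<le> Suc k"
    using assms(2) unfolding wk_def by blast
  have "successively E (rev xs)" using xs(3) assms(1)
    by (simp add: successively_mono[of _ xs])
  then show ?thesis unfolding wk_def using xs
    by (intro exI[of _ "rev xs"]) (auto simp: hd_rev last_rev)
qed

lemma wk_mono: "wk E S k x y \<Longrightarrow> S \<subseteq> S' \<Longrightarrow> k \<le> k' \<Longrightarrow> wk E S' k' x y"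
  unfolding wk_def by (metis Suc_le_mono le_trans order_trans)

lemma split_up:
  fixes t :: "'a::linorder"
  shows "successively E xs \<Longrightarrow> xs \<noteq> [] \<Longrightarrow> hd xs < t \<Longrightarrow> t \<le> last xs \<Longrightarrow>
    \<exists>ys a b zs. xs = ys @ a # b # zs \<and> a < t \<and> t \<le> b"
proof (induction xs)
  case Nil then show ?case by simp
next
  case (Cons x rest)
  then have r: "rest \<noteq> []" by auto
  show ?case
  proof (cases "t \<le> hd rest")
    case True
    then show ?thesis using Cons.prems r by (intro exI[of _ "[]"] exI[of _ x] exI[of _ "hd rest"] exI[of _ "tl rest"]) auto
  next
    case False
    then obtain ys a b zs where "rest = ys @ a # b # zs \<and> a < t \<and> t \<le> b"
      using Cons.IH Cons.prems r by (auto simp: successively_Cons not_le)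
    then show ?thesis by (intro exI[of _ "x#ys"]) auto
  qed
qed

lemma split_down:
  fixes t :: "'a::linorder"
  shows "successively E xs \<Longrightarrow> xs \<noteq> [] \<Longrightarrow> t < hd xs \<Longrightarrow> last xs \<le> t \<Longrightarrow>
    \<exists>ys a b zs. xs = ys @ a # b # zs \<and> t < a \<and> b \<le> t"
proof (induction xs)
  case Nil then show ?case by simp
next
  case (Cons x rest)
  then have r: "rest \<noteq> []" by auto
  show ?case
  proof (cases "hd rest \<le> t")
    case True
    then show ?thesis using Cons.prems r by (intro exI[of _ "[]"] exI[of _ x] exI[of _ "hd rest"] exI[of _ "tl rest"]) auto
  next
    case False
    then obtain ys a b zs where "rest = ys @ a # b # zs \<and> t < a \<and> b \<le> t"
      using Cons.IH Cons.prems r by (auto simp: successively_Cons not_le)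
    then show ?thesis by (intro exI[of _ "x#ys"]) auto
  qed
qed

lemma Xrule: "X_property V E \<Longrightarrow> p \<in> V \<Longrightarrow> q \<in> V \<Longrightarrow> r \<in> V \<Longrightarrow> s \<in> V \<Longrightarrow>
  p < q \<Longrightarrow> q < r \<Longrightarrow> r < s \<Longrightarrow> E p r \<Longrightarrow> E q s \<Longrightarrow> E p s"
  unfolding X_property_def by blast

lemma exit_lem:
  fixes a b :: "'a::linorder"
  assumes X: "X_property V E" and sy: "\<And>u v. E u v \<Longrightarrow> E v u"
    and ab: "a < b" "E a b" "a \<in> V" "b \<in> V"
  shows "set xs \<subseteq> V \<Longrightarrow> successively E xs \<Longrightarrow> xs \<noteq> [] \<Longrightarrow> a < hd xs \<Longrightarrow> hd xs < b \<Longrightarrow>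
    \<not> (a < last xs \<and> last xs < b) \<Longrightarrow> \<exists>z\<in>set xs. z = a \<or> z = b \<or> E z b \<or> E a z"
proof (induction xs)
  case Nil then show ?case by simp
next
  case (Cons x rest)
  then have r: "rest \<noteq> []" by auto
  let ?y = "hd rest"
  have yr0: "?y \<in> set rest" using r by simp
  then have yr: "?y \<in> set (x # rest)" by simp
  have exy: "E x ?y" using Cons.prems r by (auto simp: successively_Cons)
  have V: "x \<in> V" "?y \<in> V" using Cons.prems yr0 by auto
  show ?case
  proof (cases "a < ?y \<and> ?y < b")
    case True
    then have "\<exists>z\<in>set rest. z = a \<or> z = b \<or> E z b \<or> E a z"
      using Cons.IH Cons.prems r by (auto simp: successively_Cons)
    then show ?thesis by auto
  next
    case False
    then consider "?y = a" | "?y = b" | "?y < a" | "b < ?y" by fastforce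
    then show ?thesis
    proof cases
      case 3
      have xab: "a < x" "x < b" using Cons.prems by auto
      have "E ?y b" using Xrule[OF X V(2) ab(3) V(1) ab(4) 3 xab sy[OF exy] ab(2)] .
      then show ?thesis using yr by blast
    next
      case 4
      have xab: "a < x" "x < b" using Cons.prems by auto
      have "E a ?y" using Xrule[OF X ab(3) V(1) ab(4) V(2) xab 4 ab(2) exy] .
      then show ?thesis using yr by blast
    next
      case 1 then show ?thesis using yr by blast
    next
      case 2 then show ?thesis using yr by blast
    qed
  qed
qed

lemma cross_lem:
  fixes s t :: "'a::linorder"
  assumes X: "X_property V E" and sy: "\<And>u v. E u v \<Longrightarrow> E v u"
    and P: "P \<noteq> []" "set P \<subseteq> V" "successively E P" "hd P = s" "t \<le> last P"
    and Q: "Q \<noteq> []" "set Q \<subseteq> V" "successively E Q" "hd Q = t" "last Q \<le> s"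
    and st: "s < t"
  shows "\<exists>x\<in>set P. \<exists>y\<in>set Q. x = y \<or> E x y"
proof -
  have hPt: "hd P < t" using P(4) st by simp
  obtain ys a b zs where Pd: "P = ys @ a # b # zs" "a < t" "t \<le> b"
    using split_up[OF P(3,1) hPt P(5)] by blast
  have hQs: "s < hd Q" using Q(4) st by simp
  obtain us d c ws where Qd: "Q = us @ d # c # ws" "s < d" "c \<le> s"
    using split_down[OF Q(3,1) hQs Q(5)] by blast
  have sP: "successively E (ys @ [a])" "E a b" using P(3) unfolding Pd(1)
    by (auto simp: successively_append_iff)
  have sQ: "successively E (us @ [d])" "E d c" using Q(3) unfolding Qd(1)
    by (auto simp: successively_append_iff)
  have hP: "hd (ys @ [a]) = s" using P(4) Pd(1) by (cases ys) auto
  have hQ: "hd (us @ [d]) = t" using Q(4) Qd(1) by (cases us) auto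
  have setP: "set (ys @ [a]) \<subseteq> set P" "a \<in> set P" "b \<in> set P" using Pd by auto
  have sinP: "s \<in> set P" using P(1,4) hd_in_set by blast
  have setQ: "set (us @ [d]) \<subseteq> set Q" "c \<in> set Q" "d \<in> set Q" using Qd by auto
  have tinQ: "t \<in> set Q" using Q(1,4) hd_in_set by blast
  have VV: "a \<in> V" "b \<in> V" "c \<in> V" "d \<in> V" using setP setQ P Q by auto
  show ?thesis
  proof (cases "b = t \<or> c = s")
    case True
    then show ?thesis using setP setQ sinP tinQ by blast
  next
    case False
    then have bt: "t < b" and cs: "c < s" using Pd Qd by auto
    show ?thesis
    proof (cases "d \<le> a \<or> b \<le> d")
      case True
      have "\<exists>z\<in>set (us @ [d]). z = a \<or> z = b \<or> E z b \<or> E a z"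
      proof (rule exit_lem[OF X sy _ sP(2) VV(1,2)])
        show "a < b" using Pd(2) bt by simp
        show "set (us @ [d]) \<subseteq> V" using setQ Q(2) by blast
        show "successively E (us @ [d])" by (rule sQ(1))
        show "us @ [d] \<noteq> []" by simp
        show "a < hd (us @ [d])" "hd (us @ [d]) < b" using hQ Pd(2) bt by auto
        show "\<not> (a < last (us @ [d]) \<and> last (us @ [d]) < b)" using True by auto
      qed
      then obtain z where "z \<in> set Q" "z = a \<or> z = b \<or> E z b \<or> E a z" using setQ by blast
      then show ?thesis using setP sy by blast
    next
      case False
      then have ad: "a < d" "d < b" by auto
      consider "c < a" | "c = a" | "a < c" by fastforce
      then show ?thesis
      proof cases
        case 1
        have "E c b" using Xrule[OF X VV(3) VV(1) VV(4) VV(2) 1 ad sy[OF sQ(2)] sP(2)] .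
        then show ?thesis using setP setQ sy by blast
      next
        case 2 then show ?thesis using setP setQ by blast
      next
        case 3
        have "\<exists>z\<in>set (ys @ [a]). z = c \<or> z = d \<or> E z d \<or> E c z"
        proof (rule exit_lem[OF X sy _ sy[OF sQ(2)] VV(3,4)])
          show "c < d" using Qd(2) cs by simp
          show "set (ys @ [a]) \<subseteq> V" using setP P(2) by blast
          show "successively E (ys @ [a])" by (rule sP(1))
          show "ys @ [a] \<noteq> []" by simp
          show "c < hd (ys @ [a])" "hd (ys @ [a]) < d" using hP Qd(2) cs by auto
          show "\<not> (c < last (ys @ [a]) \<and> last (ys @ [a]) < d)" using 3 by auto
        qed
        then obtain z where "z \<in> set P" "z = c \<or> z = d \<or> E z d \<or> E c z" using setP by blast
        then show ?thesis using setQ sy by blast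
      qed
    qed
  qed
qed

lemma reach_fin:
  assumes "finite V" "S \<subseteq> V" "x \<in> S"
  shows "Min {v. reach_le E S k x v} \<in> {v. reach_le E S k x v}" "Max {v. reach_le E S k x v} \<in> {v. reach_le E S k x v}"
proof -
  have sub: "{v. reach_le E S k x v} \<subseteq> V"
    using assms(2) unfolding reach_le_def path_in_def by (auto dest!: last_in_set)
  have fin: "finite {v. reach_le E S k x v}" using finite_subset[OF sub assms(1)] .
  have "wk E S k x x" by (rule wk_mono[OF wk_refl[OF assms(3)] subset_refl]) simp
  then have "reach_le E S k x x" by (simp only: reach_le_wk)
  then have ne: "{v. reach_le E S k x v} \<noteq> {}" by blast
  show "Min {v. reach_le E S k x v} \<in> {v. reach_le E S k x v}" using Min_in[OF fin ne] .
  show "Max {v. reach_le E S k x v} \<in> {v. reach_le E S k x v}" using Max_in[OF fin ne] .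
qed

lemma gdist_le: "wk E V k s t \<Longrightarrow> gdist V E s t \<le> k"
  unfolding gdist_def reach_le_wk[symmetric] by (rule Least_le)

lemma wk_mem:
  assumes "xs \<noteq> []" "set xs \<subseteq> S" "successively E xs" "z \<in> set xs"
  shows "wk E S (length xs - 1) (hd xs) z"
proof -
  obtain i where i: "i < length xs" "xs ! i = z" using assms(4) by (meson in_set_conv_nth)
  let ?ys = "take (Suc i) xs"
  have "successively E (?ys @ drop (Suc i) xs)" using assms(3) by simp
  then have "successively E ?ys" by (simp only: successively_append_iff)
  moreover have "set ?ys \<subseteq> S" using assms(2) set_take_subset by fastforce
  moreover have "hd ?ys = hd xs" using assms(1) by (cases xs) auto
  moreover have "last ?ys = z" using i by (simp add: take_Suc_conv_app_nth)
  moreover have "?ys \<noteq> []" using assms(1) by simp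
  moreover have "length ?ys \<le> Suc (length xs - 1)" by simp
  ultimately show ?thesis unfolding wk_def by blast
qed

lemma extend_end:
  assumes "wk E S k x v" "S \<subseteq> V" "G v \<or> (\<exists>u\<in>V. E v u \<and> G u)"
  shows "\<exists>P. P \<noteq> [] \<and> set P \<subseteq> V \<and> successively E P \<and> hd P = x \<and> G (last P) \<and> length P \<le> Suc (Suc k)"
proof -
  obtain xs where xs: "xs \<noteq> []" "set xs \<subseteq> S" "successively E xs" "hd xs = x" "last xs = v" "length xs \<le> Suc k"
    using assms(1) unfolding wk_def by blast
  show ?thesis
  proof (cases "G v")
    case True then show ?thesis using xs assms(2) by (intro exI[of _ xs]) auto
  next
    case False
    then obtain u where u: "u \<in> V" "E v u" "G u" using assms(3) by blast
    have "successively E (xs @ [u])" using xs u by (simp add: successively_append_iff)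
    then show ?thesis using xs u assms(2) by (intro exI[of _ "xs @ [u]"]) auto
  qed
qed

lemma rhor: "finite V \<Longrightarrow> t \<le> rhorizon V E v \<Longrightarrow> t \<le> v \<or> (\<exists>u\<in>V. E v u \<and> t \<le> u)"
  unfolding rhorizon_def using Max_in[of "{v} \<union> {u \<in> V. E v u}"] by fastforce

lemma lhor: "finite V \<Longrightarrow> lhorizon V E v \<le> s \<Longrightarrow> v \<le> s \<or> (\<exists>u\<in>V. E v u \<and> u \<le> s)"
  unfolding lhorizon_def using Min_in[of "{v} \<union> {u \<in> V. E v u}"] by fastforce

theorem lemma12:
  fixes V :: "'a::linorder set" and E :: "'a \<Rightarrow> 'a \<Rightarrow> bool"
    and s t :: 'a and d :: int
  assumes "simple_graph V E" and "X_property V E"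
    and "s \<in> V" and "t \<in> V" and "s < t"
    and "connected_pair V E s t"
  shows "((\<exists>\<sigma> \<tau> :: nat. int \<sigma> + int \<tau> = d \<and> beta_s V E s t \<sigma> = beta_t V E s t \<tau>)
           \<longrightarrow> int (gdist V E s t) \<le> d)
       \<and> ((\<exists>\<sigma> \<tau> :: nat. int \<sigma> + int \<tau> = d - 1 \<and> E (alpha_s V E s t \<sigma>) (alpha_t V E s t \<tau>))
           \<longrightarrow> int (gdist V E s t) \<le> d)
       \<and> ((\<exists>\<sigma> \<tau> :: nat. \<exists>v w. int \<sigma> + int \<tau> = d - 3
             \<and> v \<in> {alpha_s V E s t \<sigma>, beta_s V E s t \<sigma>}
             \<and> w \<in> {alpha_t V E s t \<tau>, beta_t V E s t \<tau>}
             \<and> v < w \<and> t \<le> rhorizon V E v \<and> lhorizon V E w \<le> s)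
           \<longrightarrow> int (gdist V E s t) \<le> d)"
proof -
  let ?L = "{u \<in> V. u \<le> t}" and ?R = "{u \<in> V. s \<le> u}"
  have fin: "finite V" and sy: "\<And>u v. E u v \<Longrightarrow> E v u" and EV: "\<And>u v. E u v \<Longrightarrow> u \<in> V \<and> v \<in> V"
    using assms(1) unfolding simple_graph_def by auto
  have L: "?L \<subseteq> V" "s \<in> ?L" using assms by auto
  have R: "?R \<subseteq> V" "t \<in> ?R" using assms by auto
  have asL: "wk E ?L k s (alpha_s V E s t k)" "wk E ?L k s (beta_s V E s t k)" for k
  proof -
    have "reach_le E ?L k s (alpha_s V E s t k)" using reach_fin(1)[OF fin L, of E k] unfolding alpha_s_def by simp
    then show "wk E ?L k s (alpha_s V E s t k)" by (simp only: reach_le_wk)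
    have "reach_le E ?L k s (beta_s V E s t k)" using reach_fin(2)[OF fin L, of E k] unfolding beta_s_def by simp
    then show "wk E ?L k s (beta_s V E s t k)" by (simp only: reach_le_wk)
  qed
  have atR: "wk E ?R k t (alpha_t V E s t k)" "wk E ?R k t (beta_t V E s t k)" for k
  proof -
    have "reach_le E ?R k t (alpha_t V E s t k)" using reach_fin(2)[OF fin R, of E k] unfolding alpha_t_def by simp
    then show "wk E ?R k t (alpha_t V E s t k)" by (simp only: reach_le_wk)
    have "reach_le E ?R k t (beta_t V E s t k)" using reach_fin(1)[OF fin R, of E k] unfolding beta_t_def by simp
    then show "wk E ?R k t (beta_t V E s t k)" by (simp only: reach_le_wk)
  qed
  have as: "wk E V k s (alpha_s V E s t k)" "wk E V k s (beta_s V E s t k)" for k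
    using wk_mono[OF asL(1) L(1) order_refl] wk_mono[OF asL(2) L(1) order_refl] by auto
  have at: "wk E V k (alpha_t V E s t k) t" "wk E V k (beta_t V E s t k) t" for k
    using wk_sym[OF sy wk_mono[OF atR(1) R(1) order_refl]] wk_sym[OF sy wk_mono[OF atR(2) R(1) order_refl]] by auto
  have dist: "int (gdist V E s t) \<le> int k" if "wk E V k s t" for k
    using gdist_le[OF that] by simp
  have i: "int (gdist V E s t) \<le> d" if "int \<sigma> + int \<tau> = d" "beta_s V E s t \<sigma> = beta_t V E s t \<tau>" for \<sigma> \<tau>
  proof -
    have "wk E V \<tau> (beta_s V E s t \<sigma>) t" using at(2)[of \<tau>] that(2) by simp
    then have "wk E V (\<sigma> + \<tau>) s t" by (rule wk_trans[OF as(2)[of \<sigma>]])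
    then show ?thesis using dist that(1) by fastforce
  qed
  have ii: "int (gdist V E s t) \<le> d" if "int \<sigma> + int \<tau> = d - 1" "E (alpha_s V E s t \<sigma>) (alpha_t V E s t \<tau>)" for \<sigma> \<tau>
  proof -
    have "wk E V 1 (alpha_s V E s t \<sigma>) (alpha_t V E s t \<tau>)"
      using EV[OF that(2)] that(2) wk_edge[of "alpha_s V E s t \<sigma>" V "alpha_t V E s t \<tau>" E] by blast
    then have "wk E V (\<sigma> + 1) s (alpha_t V E s t \<tau>)" by (rule wk_trans[OF as(1)[of \<sigma>]])
    then have "wk E V (\<sigma> + 1 + \<tau>) s t" by (rule wk_trans[OF _ at(1)[of \<tau>]])
    then show ?thesis using dist that(1) by fastforce
  qed
  have iii: "int (gdist V E s t) \<le> d" if h: "int \<sigma> + int \<tau> = d - 3"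
             "v \<in> {alpha_s V E s t \<sigma>, beta_s V E s t \<sigma>}"
             "w \<in> {alpha_t V E s t \<tau>, beta_t V E s t \<tau>}"
             "t \<le> rhorizon V E v" "lhorizon V E w \<le> s" for \<sigma> \<tau> v w
  proof -
    have wv: "wk E ?L \<sigma> s v" using h(2) asL by auto
    have ww: "wk E ?R \<tau> t w" using h(3) atR by auto
    obtain P where P: "P \<noteq> []" "set P \<subseteq> V" "successively E P" "hd P = s" "t \<le> last P" "length P \<le> Suc (Suc \<sigma>)"
      using extend_end[OF wv L(1), of "\<lambda>x. t \<le> x"] rhor[OF fin h(4)] by blast
    obtain Q where Q: "Q \<noteq> []" "set Q \<subseteq> V" "successively E Q" "hd Q = t" "last Q \<le> s" "length Q \<le> Suc (Suc \<tau>)"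
      using extend_end[OF ww R(1), of "\<lambda>x. x \<le> s"] lhor[OF fin h(5)] by blast
    obtain x y where xy: "x \<in> set P" "y \<in> set Q" "x = y \<or> E x y"
      using cross_lem[OF assms(2) sy P(1-5) Q(1-5) assms(5)] by blast
    have "wk E V (length P - 1) s x" using wk_mem[OF P(1-3) xy(1)] P(4) by simp
    then have wx: "wk E V (Suc \<sigma>) s x" by (rule wk_mono) (use P(6) in auto)
    have "wk E V (length Q - 1) t y" using wk_mem[OF Q(1-3) xy(2)] Q(4) by simp
    then have "wk E V (Suc \<tau>) t y" by (rule wk_mono) (use Q(6) in auto)
    then have wy: "wk E V (Suc \<tau>) y t" using wk_sym[of E] sy by blast
    have xV: "x \<in> V" "y \<in> V" using xy(1,2) P(2) Q(2) by auto
    have "wk E V 1 x y"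
    proof (cases "x = y")
      case True then show ?thesis using wk_mono[OF wk_refl[OF xV(2)] subset_refl, of 1 E] by simp
    next
      case False then have "E x y" using xy(3) by blast
      then show ?thesis by (rule wk_edge[OF xV])
    qed
    then have "wk E V (Suc \<sigma> + 1) s y" by (rule wk_trans[OF wx])
    then have "wk E V (Suc \<sigma> + 1 + Suc \<tau>) s t" by (rule wk_trans[OF _ wy])
    then show ?thesis using dist h(1) by fastforce
  qed
  show ?thesis using i ii iii by blast
qed

end
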